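(* Fix $i\in\{1,\dots,k\}$ and $\hat z\in[2^n]$, and let $m_1,m_2\in\mathcal{M}^{\text{good}}$ satisfy $z'_i(m_1)=z'_i(m_2)=\hat z$ and $b_i(m_1)\ne b_i(m_2)$. Then there exists an element of $\mathcal{B}^{\text{err}}$ that the decoder of terminal $t$ maps to $m_1$ or to $m_2$.
   Context: Setting. $\mathcal{N}$ is a directed network containing nodes $s_1,\dots,s_k,t_1,\dots,t_k$. The network $\mathcal{G}$ is obtained from $\mathcal{N}$ by adding new nodes $s,t,A_1,\dots,A_k,B_1,\dots,B_k$ and, for each $i$, the unit-capacity edges $a_i=(s,A_i)$, two parallel edges $x_i,y_i$ from $A_i$ to $B_i$, $z_i=(A_i,s_i)$, $z'_i=(t_i,B_i)$, and $b_i=(B_i,t)$; the incoming edges of $t$ are exactly $b_1,\dots,b_k$. Admissible error patterns $\boldsymbol r=(r_e)$ are those in which at most one edge $e$ has $r_e\neq0$, with $e\notin\{a_1,\dots,a_k,b_1,\dots,b_k\}$. The output of an edge is its input XOR $r_e$. Let $\mathcal{C}$ be a length-$n$ network code on $\mathcal{G}$. The source $s$ has message $m\in[2^{kn}]$, where $[N]=\{1,\dots,N\}$. An edge $e=(u,v)$ of capacity $c_e$ carries a value in $[2^{nc_e}]$ computed from the signals on the incoming edges of $u$ (and from $m$ if $u=s$). The terminal $t$ has a decoder mapping each tuple in $[2^n]^k$ received on $(b_1,\dots,b_k)$ to a message. For an edge $e$, let $e(m,\boldsymbol r)$ be the signal received on $e$ under message $m$ and error pattern $\boldsymbol r$, and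 let $e(m)=e(m,\boldsymbol 0)$. Write $\boldsymbol b(m)=(b_1(m),\dots,b_k(m))$. Let $\mathcal{M}^{\text{good}}$ be the set of messages $m$ such that $t$ decodes to $m$ under every admissible error pattern when $m$ is sent. Let $\mathcal{B}^{\text{good}}=\{\boldsymbol b(m):m\in\mathcal{M}^{\text{good}}\}$ and $\mathcal{B}^{\text{err}}=[2^n]^k\setminus\mathcal{B}^{\text{good}}$. *)

theory Defs
  imports Main
begin

record ('v, 'e) netw =
  edgesN :: "'e set"
  tailN  :: "'e \<Rightarrow> 'v"
  headN  :: "'e \<Rightarrow> 'v"
  capN   :: "'e \<Rightarrow> nat"
  srcN   :: "nat \<Rightarrow> 'v"
  tgtN   :: "nat \<Rightarrow> 'v"
  kN     :: nat

definition acyclic_netw :: "('v, 'e) netw \<Rightarrow> bool" where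
  "acyclic_netw N \<longleftrightarrow> finite (edgesN N) \<and>
     acyclic {(tailN N e, headN N e) | e. e \<in> edgesN N}"

datatype 'v gnode = NN 'v | Src | Snk | NA nat | NB nat

datatype 'e gedge = NE 'e | Ea nat | Ex nat | Ey nat | Ez nat | Ez' nat | Eb nat

fun gtail :: "('v, 'e) netw \<Rightarrow> 'e gedge \<Rightarrow> 'v gnode" where
  "gtail N (NE e) = NN (tailN N e)"
| "gtail N (Ea i) = Src"
| "gtail N (Ex i) = NA i"
| "gtail N (Ey i) = NA i"
| "gtail N (Ez i) = NA i"
| "gtail N (Ez' i) = NN (tgtN N i)"
| "gtail N (Eb i) = NB i"

fun ghead :: "('v, 'e) netw \<Rightarrow> 'e gedge \<Rightarrow> 'v gnode" where
  "ghead N (NE e) = NN (headN N e)"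
| "ghead N (Ea i) = NA i"
| "ghead N (Ex i) = NB i"
| "ghead N (Ey i) = NB i"
| "ghead N (Ez i) = NN (srcN N i)"
| "ghead N (Ez' i) = NB i"
| "ghead N (Eb i) = Snk"

definition gedges :: "('v, 'e) netw \<Rightarrow> 'e gedge set" where
  "gedges N = NE ` edgesN N \<union>
     (\<Union>i\<in>{1..kN N}. {Ea i, Ex i, Ey i, Ez i, Ez' i, Eb i})"

fun gcap :: "('v, 'e) netw \<Rightarrow> 'e gedge \<Rightarrow> nat" where
  "gcap N (NE e) = capN N e"
| "gcap N _ = 1"

definition in_edges :: "('v, 'e) netw \<Rightarrow> 'v gnode \<Rightarrow> 'e gedge set" where
  "in_edges N u = {e \<in> gedges N. ghead N e = u}"

(* Convention: [M] = {1..M} is represented by {0..<M}, i.e. as bit strings,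
   so that the XOR of signals is bitwise XOR on naturals. *)
definition msgs :: "('v, 'e) netw \<Rightarrow> nat \<Rightarrow> nat set" where
  "msgs N n = {0..<2 ^ (kN N * n)}"

definition is_code ::
  "('v, 'e) netw \<Rightarrow> nat \<Rightarrow> ('e gedge \<Rightarrow> nat \<Rightarrow> ('e gedge \<Rightarrow> nat) \<Rightarrow> nat)
    \<Rightarrow> (nat list \<Rightarrow> nat) \<Rightarrow> bool" where
  "is_code N n enc dec \<longleftrightarrow>
     (\<forall>e\<in>gedges N. \<forall>m \<sigma> \<sigma>'.
        (\<forall>e'\<in>in_edges N (gtail N e). \<sigma> e' = \<sigma>' e') \<longrightarrow> enc e m \<sigma> = enc e m \<sigma>') \<and>
     (\<forall>e\<in>gedges N. gtail N e \<noteq> Src \<longrightarrow> (\<forall>m m' \<sigma>. enc e m \<sigma> = enc e m' \<sigma>)) \<and>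
     (\<forall>e\<in>gedges N. \<forall>m \<sigma>. m \<in> msgs N n \<longrightarrow>
        (\<forall>e'\<in>in_edges N (gtail N e). \<sigma> e' < 2 ^ (n * gcap N e')) \<longrightarrow>
        enc e m \<sigma> < 2 ^ (n * gcap N e)) \<and>
     (\<forall>xs. length xs = kN N \<longrightarrow> (\<forall>x\<in>set xs. x < 2 ^ n) \<longrightarrow> dec xs \<in> msgs N n)"

definition admissible :: "('v, 'e) netw \<Rightarrow> nat \<Rightarrow> ('e gedge \<Rightarrow> nat) \<Rightarrow> bool" where
  "admissible N n r \<longleftrightarrow>
     (\<forall>e. r e \<noteq> 0 \<longrightarrow> e \<in> gedges N \<and> (\<forall>i. e \<noteq> Ea i \<and> e \<noteq> Eb i)
                     \<and> r e < 2 ^ (n * gcap N e)) \<and>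
     (\<forall>e e'. r e \<noteq> 0 \<longrightarrow> r e' \<noteq> 0 \<longrightarrow> e = e')"

definition sig :: "('v, 'e) netw \<Rightarrow> ('e gedge \<Rightarrow> nat \<Rightarrow> ('e gedge \<Rightarrow> nat) \<Rightarrow> nat)
    \<Rightarrow> nat \<Rightarrow> ('e gedge \<Rightarrow> nat) \<Rightarrow> 'e gedge \<Rightarrow> nat" where
  "sig N enc m r = (THE \<sigma>. (\<forall>e\<in>gedges N. \<sigma> e = Bit_Operations.xor (enc e m \<sigma>) (r e)) \<and>
                            (\<forall>e. e \<notin> gedges N \<longrightarrow> \<sigma> e = 0))"

definition bvec :: "('v, 'e) netw \<Rightarrow> ('e gedge \<Rightarrow> nat \<Rightarrow> ('e gedge \<Rightarrow> nat) \<Rightarrow> nat)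
    \<Rightarrow> nat \<Rightarrow> ('e gedge \<Rightarrow> nat) \<Rightarrow> nat list" where
  "bvec N enc m r = map (\<lambda>i. sig N enc m r (Eb i)) [1..<kN N + 1]"

definition good_msgs where
  "good_msgs N n enc dec =
     {m \<in> msgs N n. \<forall>r. admissible N n r \<longrightarrow> dec (bvec N enc m r) = m}"

definition tuples :: "('v, 'e) netw \<Rightarrow> nat \<Rightarrow> nat list set" where
  "tuples N n = {xs. length xs = kN N \<and> (\<forall>x\<in>set xs. x < 2 ^ n)}"

definition B_good where
  "B_good N n enc dec = (\<lambda>m. bvec N enc m (\<lambda>_. 0)) ` good_msgs N n enc dec"

definition B_err where
  "B_err N n enc dec = tuples N n - B_good N n enc dec"

end

theory Submission imports Defs begin

lemma xor_lt: "(a::nat) < 2^k \<Longrightarrow> b < 2^k \<Longrightarrow> Bit_Operations.xor a b < 2^k"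
proof -
  assume "a < 2^k" "b < 2^k"
  hence "take_bit k a = a" "take_bit k b = b" by (simp_all add: take_bit_nat_eq_self_iff)
  hence "take_bit k (Bit_Operations.xor a b) = Bit_Operations.xor a b" by simp
  moreover have "take_bit k (Bit_Operations.xor a b) < 2^k" by (rule take_bit_nat_less_exp)
  ultimately show ?thesis by simp
qed

fun lvl :: "'v gnode \<Rightarrow> nat" where
  "lvl Src = 0" | "lvl (NA _) = 1" | "lvl (NN _) = 2" | "lvl (NB _) = 3" | "lvl Snk = 4"

definition GR where "GR N = {(gtail N e, ghead N e) | e. e \<in> gedges N}"
definition NR where "NR N = {(tailN N e, headN N e) | e. e \<in> edgesN N}"
definition ER where "ER N = {(e', e). e \<in> gedges N \<and> e' \<in> gedges N \<and> ghead N e' = gtail N e}"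

lemma edge_cases: "e \<in> gedges N \<Longrightarrow> (\<exists>e0. e = NE e0 \<and> e0 \<in> edgesN N) \<or> lvl (gtail N e) < lvl (ghead N e)"
  by (cases e) (auto simp: gedges_def)

lemma GR_trancl:
  assumes "(a,b) \<in> (GR N)\<^sup>+"
  shows "lvl a < lvl b \<or> (\<exists>u v. a = NN u \<and> b = NN v \<and> (u,v) \<in> (NR N)\<^sup>+)"
  using assms
proof (induction rule: trancl_induct)
  case (base y)
  then obtain e where e: "e \<in> gedges N" "a = gtail N e" "y = ghead N e" by (auto simp: GR_def)
  from edge_cases[OF e(1)] show ?case
  proof
    assume "\<exists>e0. e = NE e0 \<and> e0 \<in> edgesN N"
    then obtain e0 where "e = NE e0" "e0 \<in> edgesN N" by blast
    thus ?case using e by (auto simp: NR_def)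
  qed (use e in auto)
next
  case (step y z)
  then obtain e where e: "e \<in> gedges N" "y = gtail N e" "z = ghead N e" by (auto simp: GR_def)
  from edge_cases[OF e(1)] show ?case
  proof
    assume "\<exists>e0. e = NE e0 \<and> e0 \<in> edgesN N"
    then obtain e0 where e0: "e = NE e0" "e0 \<in> edgesN N" by blast
    from step.IH show ?case
    proof
      assume "lvl a < lvl y" thus ?case using e e0 by auto
    next
      assume "\<exists>u v. a = NN u \<and> y = NN v \<and> (u, v) \<in> (NR N)\<^sup>+"
      then obtain u v where "a = NN u" "y = NN v" "(u, v) \<in> (NR N)\<^sup>+" by blast
      moreover have "(v, headN N e0) \<in> NR N" using e e0 \<open>y = NN v\<close> by (auto simp: NR_def)
      ultimately show ?case using e e0 by (auto intro: trancl_into_trancl)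
    qed
  next
    assume l: "lvl (gtail N e) < lvl (ghead N e)"
    from step.IH show ?case
    proof
      assume "lvl a < lvl y" thus ?case using e l by auto
    next
      assume "\<exists>u v. a = NN u \<and> y = NN v \<and> (u, v) \<in> (NR N)\<^sup>+"
      thus ?case using e l by auto
    qed
  qed
qed

lemma gedges_finite: "acyclic_netw N \<Longrightarrow> finite (gedges N)"
  by (auto simp: gedges_def acyclic_netw_def)

lemma ER_wf:
  assumes "acyclic_netw N" shows "wf (ER N)"
proof (rule finite_acyclic_wf)
  have "ER N \<subseteq> gedges N \<times> gedges N" by (auto simp: ER_def)
  thus "finite (ER N)" using gedges_finite[OF assms] by (meson finite_SigmaI finite_subset)
  have tr: "(gtail N x, gtail N y) \<in> (GR N)\<^sup>+" if "(x,y) \<in> (ER N)\<^sup>+" for x y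
    using that
  proof (induction rule: trancl_induct)
    case (base y)
    hence "x \<in> gedges N" "ghead N x = gtail N y" by (auto simp: ER_def)
    hence "(gtail N x, gtail N y) \<in> GR N" unfolding GR_def by force
    thus ?case by (rule r_into_trancl)
  next
    case (step y z)
    hence "(gtail N y, gtail N z) \<in> GR N" by (auto simp: ER_def GR_def)
    thus ?case using step.IH by auto
  qed
  show "acyclic (ER N)"
    unfolding acyclic_def
  proof (intro allI notI)
    fix x assume "(x,x) \<in> (ER N)\<^sup>+"
    from GR_trancl[OF tr[OF this]] obtain u where "(u,u) \<in> (NR N)\<^sup>+" by auto
    thus False using assms by (auto simp: acyclic_netw_def acyclic_def NR_def)
  qed
qed

definition sol where
  "sol N enc m r \<sigma> \<longleftrightarrow> (\<forall>e\<in>gedges N. \<sigma> e = Bit_Operations.xor (enc e m \<sigma>) (r e)) \<and>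
                            (\<forall>e. e \<notin> gedges N \<longrightarrow> \<sigma> e = 0)"

lemma in_ER: "e \<in> gedges N \<Longrightarrow> e' \<in> in_edges N (gtail N e) \<Longrightarrow> (e', e) \<in> ER N"
  by (auto simp: in_edges_def ER_def)

lemma local_enc: "is_code N n enc dec \<Longrightarrow> e \<in> gedges N \<Longrightarrow>
   (\<And>e'. e' \<in> in_edges N (gtail N e) \<Longrightarrow> \<sigma> e' = \<sigma>' e') \<Longrightarrow> enc e m \<sigma> = enc e m \<sigma>'"
  unfolding is_code_def by blast

lemma sol_unique:
  assumes "acyclic_netw N" "is_code N n enc dec" "sol N enc m r \<sigma>" "sol N enc m r \<sigma>'"
  shows "\<sigma> = \<sigma>'"
proof
  fix e
  show "\<sigma> e = \<sigma>' e"
    using ER_wf[OF assms(1)]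
  proof (induction e rule: wf_induct_rule)
    case (less e)
    show ?case
    proof (cases "e \<in> gedges N")
      case True
      have "enc e m \<sigma> = enc e m \<sigma>'"
        by (rule local_enc[OF assms(2) True]) (rule less.IH[OF in_ER[OF True]])
      thus ?thesis using assms(3,4) True by (simp add: sol_def)
    next
      case False thus ?thesis using assms(3,4) by (simp add: sol_def)
    qed
  qed
qed

lemma sol_exists:
  assumes "acyclic_netw N" "is_code N n enc dec"
  shows "\<exists>\<sigma>. sol N enc m r \<sigma>"
proof -
  define F where "F = (\<lambda>f e. if e \<in> gedges N then Bit_Operations.xor (enc e m f) (r e) else (0::nat))"
  define \<sigma> where "\<sigma> = wfrec (ER N) F"
  have wf: "wf (ER N)" by (rule ER_wf[OF assms(1)])
  have "sol N enc m r \<sigma>"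
    unfolding sol_def
  proof (intro conjI ballI allI impI)
    fix e assume e: "e \<in> gedges N"
    have "\<sigma> e = F (cut \<sigma> (ER N) e) e" unfolding \<sigma>_def by (rule wfrec[OF wf])
    also have "enc e m (cut \<sigma> (ER N) e) = enc e m \<sigma>"
      by (rule local_enc[OF assms(2) e]) (simp add: cut_def in_ER[OF e])
    ultimately show "\<sigma> e = Bit_Operations.xor (enc e m \<sigma>) (r e)" using e by (simp add: F_def)
  next
    fix e assume e: "e \<notin> gedges N"
    have "\<sigma> e = F (cut \<sigma> (ER N) e) e" unfolding \<sigma>_def by (rule wfrec[OF wf])
    thus "\<sigma> e = 0" using e by (simp add: F_def)
  qed
  thus ?thesis by blast
qed

lemma sig_sol:
  assumes "acyclic_netw N" "is_code N n enc dec"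
  shows "sol N enc m r (sig N enc m r)"
proof -
  obtain \<sigma> where s: "sol N enc m r \<sigma>" using sol_exists[OF assms] by blast
  have "sig N enc m r = (THE \<sigma>. sol N enc m r \<sigma>)" unfolding sig_def sol_def by simp
  also have "\<dots> = \<sigma>"
    by (rule the_equality[where P="sol N enc m r", OF s]) (rule sol_unique[OF assms _ s])
  finally have "sig N enc m r = \<sigma>" .
  thus ?thesis using s by simp
qed

lemma sig_eq:
  assumes "acyclic_netw N" "is_code N n enc dec" "sol N enc m r \<sigma>"
  shows "sig N enc m r = \<sigma>"
  using sol_unique[OF assms(1,2) sig_sol[OF assms(1,2)] assms(3)] .

lemma sol_bound:
  assumes "acyclic_netw N" "is_code N n enc dec" "sol N enc m r \<sigma>" "m \<in> msgs N n"
    and rb: "\<And>e. r e < 2 ^ (n * gcap N e)"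
  shows "e \<in> gedges N \<Longrightarrow> \<sigma> e < 2 ^ (n * gcap N e)"
  using ER_wf[OF assms(1)]
proof (induction e rule: wf_induct_rule)
  case (less e)
  have "\<forall>e'\<in>in_edges N (gtail N e). \<sigma> e' < 2 ^ (n * gcap N e')"
    using less.IH in_ER[OF less.prems] by (auto simp: in_edges_def)
  hence "enc e m \<sigma> < 2 ^ (n * gcap N e)" using assms(2,4) less.prems unfolding is_code_def by blast
  thus ?case using assms(3) less.prems rb[of e] xor_lt by (simp add: sol_def)
qed

lemma adm_bound: "admissible N n r \<Longrightarrow> r e < 2 ^ (n * gcap N e)"
  unfolding admissible_def by (cases "r e = 0") auto

lemma in_edges_head: "e' \<in> in_edges N u \<Longrightarrow> ghead N e' = u \<and> e' \<in> gedges N"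
  by (simp add: in_edges_def)

lemma gtail_not_Snk: "gtail N e \<noteq> Snk" by (cases e) auto

lemma gtail_NB: "gtail N e = NB i \<Longrightarrow> e = Eb i" by (cases e) auto

lemma in_NB: "ghead N e' = NB i \<Longrightarrow> e' = Ex i \<or> e' = Ey i \<or> e' = Ez' i" by (cases e') auto

lemma i_edges: "i \<in> {1..kN N} \<Longrightarrow> Ea i \<in> gedges N \<and> Ex i \<in> gedges N \<and> Ey i \<in> gedges N \<and>
   Ez i \<in> gedges N \<and> Ez' i \<in> gedges N \<and> Eb i \<in> gedges N"
  by (auto simp: gedges_def)

lemma err_sol:
  assumes ac: "acyclic_netw N" and code: "is_code N n enc dec" and i: "i \<in> {1..kN N}"
    and s: "sol N enc m (\<lambda>_. 0) \<sigma>" and E: "E = Ex i \<or> E = Ey i"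
  shows "sol N enc m (\<lambda>e. if e = E then Bit_Operations.xor (\<sigma> E) v else 0)
            (\<sigma>(E := v, Eb i := enc (Eb i) m (\<sigma>(E := v))))"
    (is "sol N enc m ?r ?\<tau>")
  unfolding sol_def
proof (intro conjI ballI allI impI)
  have Eg: "E \<in> gedges N" "Eb i \<in> gedges N" using i_edges[OF i] E by auto
  have hE: "ghead N E = NB i" "gtail N E = NA i" "E \<noteq> Eb i" using E by auto
  fix e assume eg: "e \<in> gedges N"
  show "?\<tau> e = Bit_Operations.xor (enc e m ?\<tau>) (?r e)"
  proof (cases "e = E")
    case True
    have "enc e m ?\<tau> = enc e m \<sigma>"
    proof (rule local_enc[OF code eg])
      fix e' assume "e' \<in> in_edges N (gtail N e)"
      hence "ghead N e' = NA i" using True hE in_edges_head by metis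
      hence "e' \<noteq> E" "e' \<noteq> Eb i" using hE by auto
      thus "?\<tau> e' = \<sigma> e'" by simp
    qed
    moreover have "\<sigma> e = enc e m \<sigma>" using s eg by (simp add: sol_def)
    ultimately show ?thesis using True hE by (simp add: xor.assoc[symmetric])
  next
    case F: False
    show ?thesis
    proof (cases "e = Eb i")
      case True
      have "enc e m ?\<tau> = enc e m (\<sigma>(E := v))"
      proof (rule local_enc[OF code eg])
        fix e' assume "e' \<in> in_edges N (gtail N e)"
        hence "ghead N e' = NB i" using True in_edges_head by fastforce
        hence "e' \<noteq> Eb i" by auto
        thus "?\<tau> e' = (\<sigma>(E := v)) e'" by simp
      qed
      thus ?thesis using True hE by simp
    next
      case False
      have "enc e m ?\<tau> = enc e m \<sigma>"
      proof (rule local_enc[OF code eg])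
        fix e' assume "e' \<in> in_edges N (gtail N e)"
        hence h: "ghead N e' = gtail N e" using in_edges_head by metis
        have "e' \<noteq> Eb i" using h gtail_not_Snk[of N e] by auto
        moreover have "e' \<noteq> E" using h hE gtail_NB[of N e i] False by auto
        ultimately show "?\<tau> e' = \<sigma> e'" by simp
      qed
      moreover have "\<sigma> e = enc e m \<sigma>" using s eg by (simp add: sol_def)
      ultimately show ?thesis using F False by simp
    qed
  qed
next
  have Eg: "E \<in> gedges N" "Eb i \<in> gedges N" using i_edges[OF i] E by auto
  fix e assume "e \<notin> gedges N"
  thus "?\<tau> e = 0" using Eg s by (auto simp: sol_def)
qed

lemma zero_adm: "admissible N n (\<lambda>_. 0)" by (simp add: admissible_def)

lemma err_adm:
  assumes i: "i \<in> {1..kN N}" and E: "E = Ex i \<or> E = Ey i" and a: "a < 2^n" and b: "b < 2^n"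
  shows "admissible N n (\<lambda>e. if e = E then Bit_Operations.xor a b else 0)"
  using i_edges[OF i] E xor_lt[OF a b] unfolding admissible_def by auto

lemma nth_bv: "j < k \<Longrightarrow> map f [1..<k+1] ! j = f (Suc j)"
  by (simp del: upt_Suc add: nth_upt)

theorem lemma2:
  fixes N :: "('v, 'e) netw" and n :: nat
    and enc :: "'e gedge \<Rightarrow> nat \<Rightarrow> ('e gedge \<Rightarrow> nat) \<Rightarrow> nat"
    and dec :: "nat list \<Rightarrow> nat"
    and i zhat m1 m2 :: nat
  assumes "acyclic_netw N"
    and "is_code N n enc dec"
    and "i \<in> {1..kN N}"
    and "zhat < 2 ^ n"
    and "m1 \<in> good_msgs N n enc dec" and "m2 \<in> good_msgs N n enc dec"
    and "sig N enc m1 (\<lambda>_. 0) (Ez' i) = zhat"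
    and "sig N enc m2 (\<lambda>_. 0) (Ez' i) = zhat"
    and "sig N enc m1 (\<lambda>_. 0) (Eb i) \<noteq> sig N enc m2 (\<lambda>_. 0) (Eb i)"
  shows "\<exists>\<beta>\<in>B_err N n enc dec. dec \<beta> = m1 \<or> dec \<beta> = m2"
proof (rule ccontr)
  assume nex: "\<not> (\<exists>\<beta>\<in>B_err N n enc dec. dec \<beta> = m1 \<or> dec \<beta> = m2)"
  note ac = assms(1) and code = assms(2) and i = assms(3)
  define \<sigma>1 where "\<sigma>1 = sig N enc m1 (\<lambda>_. 0)"
  define \<sigma>2 where "\<sigma>2 = sig N enc m2 (\<lambda>_. 0)"
  have m1: "m1 \<in> msgs N n" and m2: "m2 \<in> msgs N n" using assms(5,6) by (auto simp: good_msgs_def)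
  have s1: "sol N enc m1 (\<lambda>_. 0) \<sigma>1" unfolding \<sigma>1_def by (rule sig_sol[OF ac code])
  have s2: "sol N enc m2 (\<lambda>_. 0) \<sigma>2" unfolding \<sigma>2_def by (rule sig_sol[OF ac code])
  have ie: "Ex i \<in> gedges N" "Ey i \<in> gedges N" using i_edges[OF i] by auto
  have b1: "\<sigma>1 e < 2 ^ (n * gcap N e)" if "e \<in> gedges N" for e
    by (rule sol_bound[OF ac code s1 m1 adm_bound[OF zero_adm] that])
  have b2: "\<sigma>2 e < 2 ^ (n * gcap N e)" if "e \<in> gedges N" for e
    by (rule sol_bound[OF ac code s2 m2 adm_bound[OF zero_adm] that])
  have x1b: "\<sigma>1 (Ex i) < 2^n" "\<sigma>1 (Ey i) < 2^n" using b1[OF ie(1)] b1[OF ie(2)] by simp_all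
  have x2b: "\<sigma>2 (Ex i) < 2^n" "\<sigma>2 (Ey i) < 2^n" using b2[OF ie(1)] b2[OF ie(2)] by simp_all
  define x1 where "x1 = \<sigma>1 (Ex i)"
  define y2 where "y2 = \<sigma>2 (Ey i)"
  define r1 :: "'e gedge \<Rightarrow> nat" where "r1 = (\<lambda>e. if e = Ey i then Bit_Operations.xor (\<sigma>1 (Ey i)) y2 else 0)"
  define r2 :: "'e gedge \<Rightarrow> nat" where "r2 = (\<lambda>e. if e = Ex i then Bit_Operations.xor (\<sigma>2 (Ex i)) x1 else 0)"
  define w1 where "w1 = enc (Eb i) m1 (\<sigma>1(Ey i := y2))"
  define w2 where "w2 = enc (Eb i) m2 (\<sigma>2(Ex i := x1))"
  have a1: "admissible N n r1" unfolding r1_def y2_def by (rule err_adm[OF i]) (use x1b x2b in auto)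
  have a2: "admissible N n r2" unfolding r2_def x1_def by (rule err_adm[OF i]) (use x1b x2b in auto)
  have t1: "sol N enc m1 r1 (\<sigma>1(Ey i := y2, Eb i := w1))"
    unfolding r1_def w1_def by (rule err_sol[OF ac code i s1]) simp
  have t2: "sol N enc m2 r2 (\<sigma>2(Ex i := x1, Eb i := w2))"
    unfolding r2_def w2_def by (rule err_sol[OF ac code i s2]) simp
  have ww: "w1 = w2"
  proof -
    have "w2 = enc (Eb i) m1 (\<sigma>2(Ex i := x1))"
      unfolding w2_def using code i_edges[OF i] unfolding is_code_def by auto
    also have "\<dots> = w1" unfolding w1_def
    proof (rule local_enc[OF code])
      show "Eb i \<in> gedges N" using i_edges[OF i] by auto
      fix e' assume "e' \<in> in_edges N (gtail N (Eb i))"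
      hence "ghead N e' = NB i" using in_edges_head by fastforce
      hence "e' = Ex i \<or> e' = Ey i \<or> e' = Ez' i" by (rule in_NB)
      thus "(\<sigma>2(Ex i := x1)) e' = (\<sigma>1(Ey i := y2)) e'"
        using assms(7,8) unfolding x1_def y2_def \<sigma>1_def \<sigma>2_def by auto
    qed
    finally show ?thesis by simp
  qed
  have sg1: "sig N enc m1 r1 = \<sigma>1(Ey i := y2, Eb i := w1)" by (rule sig_eq[OF ac code t1])
  have sg2: "sig N enc m2 r2 = \<sigma>2(Ex i := x1, Eb i := w2)" by (rule sig_eq[OF ac code t2])
  define \<beta>1 where "\<beta>1 = bvec N enc m1 r1"
  define \<beta>2 where "\<beta>2 = bvec N enc m2 r2"
  have d1: "dec \<beta>1 = m1" using assms(5) a1 unfolding \<beta>1_def good_msgs_def by auto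
  have d2: "dec \<beta>2 = m2" using assms(6) a2 unfolding \<beta>2_def good_msgs_def by auto
  have tu1: "\<beta>1 \<in> tuples N n"
  proof -
    have "sig N enc m1 r1 (Eb j) < 2^n" if "j \<in> {1..kN N}" for j
      using sol_bound[OF ac code sig_sol[OF ac code] m1 adm_bound[OF a1], of "Eb j"] i_edges[OF that]
      by simp
    thus ?thesis unfolding \<beta>1_def tuples_def bvec_def by auto
  qed
  have tu2: "\<beta>2 \<in> tuples N n"
  proof -
    have "sig N enc m2 r2 (Eb j) < 2^n" if "j \<in> {1..kN N}" for j
      using sol_bound[OF ac code sig_sol[OF ac code] m2 adm_bound[OF a2], of "Eb j"] i_edges[OF that]
      by simp
    thus ?thesis unfolding \<beta>2_def tuples_def bvec_def by auto
  qed
  have bg1: "\<beta>1 = bvec N enc m1 (\<lambda>_. 0)"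
  proof -
    have "\<beta>1 \<in> B_good N n enc dec" using nex tu1 d1 unfolding B_err_def by auto
    then obtain m' where m': "m' \<in> good_msgs N n enc dec" "\<beta>1 = bvec N enc m' (\<lambda>_. 0)"
      unfolding B_good_def by auto
    have "dec (bvec N enc m' (\<lambda>_. 0)) = m'" using m'(1) zero_adm unfolding good_msgs_def by auto
    thus ?thesis using m' d1 by simp
  qed
  have bg2: "\<beta>2 = bvec N enc m2 (\<lambda>_. 0)"
  proof -
    have "\<beta>2 \<in> B_good N n enc dec" using nex tu2 d2 unfolding B_err_def by auto
    then obtain m' where m': "m' \<in> good_msgs N n enc dec" "\<beta>2 = bvec N enc m' (\<lambda>_. 0)"
      unfolding B_good_def by auto
    have "dec (bvec N enc m' (\<lambda>_. 0)) = m'" using m'(1) zero_adm unfolding good_msgs_def by auto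
    thus ?thesis using m' d2 by simp
  qed
  have ix: "i - 1 < kN N" "[1..<kN N + 1] ! (i - 1) = i" using i by (auto simp del: upt_Suc simp add: nth_upt)
  have "\<beta>1 ! (i - 1) = w1" unfolding \<beta>1_def bvec_def sg1
    by (subst nth_bv[OF ix(1)]) (use i in simp)
  moreover have "\<beta>1 ! (i - 1) = \<sigma>1 (Eb i)" unfolding bg1 bvec_def \<sigma>1_def
    by (subst nth_bv[OF ix(1)]) (use i in simp)
  moreover have "\<beta>2 ! (i - 1) = w2" unfolding \<beta>2_def bvec_def sg2
    by (subst nth_bv[OF ix(1)]) (use i in simp)
  moreover have "\<beta>2 ! (i - 1) = \<sigma>2 (Eb i)" unfolding bg2 bvec_def \<sigma>2_def
    by (subst nth_bv[OF ix(1)]) (use i in simp)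
  ultimately show False using ww assms(9) unfolding \<sigma>1_def \<sigma>2_def by simp
qed

end
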